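(* Let $P$ be a poset with an $\mathbb{R}$-action $\Lambda$. Let $I,J$ be intervals of $P$ and $\epsilon\ge0$ with $I\subseteq\mathrm{Ex}^\Lambda_\epsilon(J)$ and $J\subseteq\mathrm{Ex}^\Lambda_\epsilon(I)$. Then: - $\Omega(I,\Lambda_{-\epsilon}(J))$ equals the set of all connected components of $I\cap\Lambda_{-\epsilon}(J)$; - $\Omega(J,\Lambda_{-\epsilon}(I))$ equals the set of all connected components of $J\cap\Lambda_{-\epsilon}(I)$.
   Context: An interval of a poset $P$ is a nonempty subset that is convex ($p,q\in I$, $p\le r\le q$ imply $r\in I$) and connected (any two elements are joined by a finite sequence of elements of the subset with consecutive ones comparable). Connected components of a subset are its maximal connected subsets in this sense. For $A\subseteq P$ nonempty, $A^\uparrow=\{p:\exists a\in A,\ a\le p\}$ and $A^\downarrow=\{p:\exists a\in A,\ p\le a\}$; $\emptyset^\uparrow=\emptyset^\downarrow=P$. An $\mathbb{R}$-action on $P$ is a family $\{\Lambda_\epsilon\}_{\epsilon\ge0}$ of poset automorphisms with $p\le\Lambda_\epsilon(p)$, $\Lambda_0=\mathrm{id}$ and $\Lambda_\epsilon\Lambda_\zeta=\Lambda_{\epsilon+\zeta}$. Write $\Lambda_{-\epsilon}=\Lambda_\epsilon^{-1}$, and $\Lambda_{-\epsilon}(J)$ for the image of $J$. $\mathrm{Ex}^\Lambda_\epsilon(A)=\Lambda_\epsilon^{-1}(A)^\uparrow\cap\Lambda_\epsilon(A)^\downarrow$, where $\Lambda_\epsilon^{-1}(A)$ is the preimage. For intervals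 $I,J$, $\Omega(I,J)$ is the set of connected components $C$ of $I\cap J$ satisfying $I\cap C^\downarrow\subseteq C$ and $J\cap C^\uparrow\subseteq C$. *)

theory Defs
  imports Complex_Main
begin

definition comparable :: "'a::order \<Rightarrow> 'a \<Rightarrow> bool" where
  "comparable p q \<longleftrightarrow> p \<le> q \<or> q \<le> p"

definition connected_in :: "'a::order set \<Rightarrow> 'a \<Rightarrow> 'a \<Rightarrow> bool" where
  "connected_in S p q \<longleftrightarrow> p \<in> S \<and> q \<in> S \<and>
     (\<lambda>x y. x \<in> S \<and> y \<in> S \<and> comparable x y)\<^sup>*\<^sup>* p q"

definition poset_connected :: "'a::order set \<Rightarrow> bool" where
  "poset_connected S \<longleftrightarrow> (\<forall>p\<in>S. \<forall>q\<in>S. connected_in S p q)"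

definition poset_convex :: "'a::order set \<Rightarrow> bool" where
  "poset_convex S \<longleftrightarrow> (\<forall>p\<in>S. \<forall>q\<in>S. \<forall>r. p \<le> r \<and> r \<le> q \<longrightarrow> r \<in> S)"

definition is_interval :: "'a::order set \<Rightarrow> bool" where
  "is_interval I \<longleftrightarrow> I \<noteq> {} \<and> poset_convex I \<and> poset_connected I"

definition components :: "'a::order set \<Rightarrow> 'a set set" where
  "components A = {C. C \<noteq> {} \<and> C \<subseteq> A \<and> poset_connected C \<and>
      (\<forall>D. C \<subseteq> D \<and> D \<subseteq> A \<and> poset_connected D \<longrightarrow> D = C)}"

definition up_set :: "'a::order set \<Rightarrow> 'a set" where
  "up_set A = (if A = {} then UNIV else {p. \<exists>a\<in>A. a \<le> p})"

definition down_set :: "'a::order set \<Rightarrow> 'a set" where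
  "down_set A = (if A = {} then UNIV else {p. \<exists>a\<in>A. p \<le> a})"

definition poset_automorphism :: "('a::order \<Rightarrow> 'a) \<Rightarrow> bool" where
  "poset_automorphism f \<longleftrightarrow> bij f \<and> (\<forall>p q. p \<le> q \<longleftrightarrow> f p \<le> f q)"

text \<open>An R-action: Lam e for e \<ge> 0; values at negative e are irrelevant.\<close>
definition R_action :: "(real \<Rightarrow> 'a::order \<Rightarrow> 'a) \<Rightarrow> bool" where
  "R_action Lam \<longleftrightarrow>
     (\<forall>e\<ge>0. poset_automorphism (Lam e)) \<and>
     (\<forall>e\<ge>0. \<forall>p. p \<le> Lam e p) \<and>
     Lam 0 = id \<and>
     (\<forall>e\<ge>0. \<forall>z\<ge>0. Lam e \<circ> Lam z = Lam (e + z))"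

definition Ex :: "(real \<Rightarrow> 'a::order \<Rightarrow> 'a) \<Rightarrow> real \<Rightarrow> 'a set \<Rightarrow> 'a set" where
  "Ex Lam e A = up_set (Lam e -` A) \<inter> down_set (Lam e ` A)"

definition Omega :: "'a::order set \<Rightarrow> 'a set \<Rightarrow> 'a set set" where
  "Omega I J = {C \<in> components (I \<inter> J).
      I \<inter> down_set C \<subseteq> C \<and> J \<inter> up_set C \<subseteq> C}"

end

theory Submission
  imports Defs
begin

lemma comp_absorb:
  assumes C: "C \<in> components A" and x: "x \<in> A" and c: "c \<in> C" and cmp: "comparable x c"
  shows "x \<in> C"
proof -
  let ?D = "insert x C"
  let ?RC = "\<lambda>a b. a \<in> C \<and> b \<in> C \<and> comparable a b"
  let ?RD = "\<lambda>a b. a \<in> ?D \<and> b \<in> ?D \<and> comparable a b"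
  have CA: "C \<subseteq> A" and Cc: "poset_connected C"
    and mx: "\<And>D. C \<subseteq> D \<Longrightarrow> D \<subseteq> A \<Longrightarrow> poset_connected D \<Longrightarrow> D = C"
    using C unfolding components_def by auto
  have lift: "?RD\<^sup>*\<^sup>* p q" if "p \<in> C" "q \<in> C" for p q
  proof -
    have "?RC\<^sup>*\<^sup>* p q" using Cc that unfolding poset_connected_def connected_in_def by blast
    then show ?thesis by (rule mono_rtranclp[rule_format, rotated]) auto
  qed
  have xc: "?RD x c" using c cmp by auto
  have cx: "?RD c x" using c cmp by (auto simp: comparable_def)
  have "poset_connected ?D"
    unfolding poset_connected_def connected_in_def
  proof (intro ballI conjI)
    fix p q assume p: "p \<in> ?D" and q: "q \<in> ?D"
    show "p \<in> ?D" "q \<in> ?D" using p q by auto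
    show "?RD\<^sup>*\<^sup>* p q"
    proof (cases "p = x")
      case True
      show ?thesis
      proof (cases "q = x")
        case True with \<open>p = x\<close> show ?thesis by simp
      next
        case False
        then have "q \<in> C" using q by auto
        then have "?RD\<^sup>*\<^sup>* c q" using lift c by blast
        from converse_rtranclp_into_rtranclp[OF xc this] show ?thesis using True by simp
      qed
    next
      case False
      then have pC: "p \<in> C" using p by auto
      show ?thesis
      proof (cases "q = x")
        case True
        have "?RD\<^sup>*\<^sup>* p c" using lift c pC by blast
        from rtranclp.rtrancl_into_rtrancl[OF this cx] show ?thesis using True by simp
      next
        case False
        then have "q \<in> C" using q by auto
        then show ?thesis using lift pC by blast
      qed
    qed
  qed
  moreover have "C \<subseteq> ?D" by blast
  moreover have "?D \<subseteq> A" using CA x by blast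
  ultimately have "?D = C" using mx by blast
  then show ?thesis by auto
qed

lemma key:
  fixes L :: "'a::order \<Rightarrow> 'a" and I J :: "'a set"
  assumes bL: "bij L" and oL: "\<And>p q. p \<le> q \<longleftrightarrow> L p \<le> L q"
    and I: "is_interval I" and J: "is_interval J"
    and IJ: "I \<subseteq> Ex (\<lambda>_. L) e J" and JI: "J \<subseteq> Ex (\<lambda>_. L) e I"
  shows "Omega I (inv L ` J) = components (I \<inter> inv L ` J)"
proof -
  have K: "inv L ` J = L -` J" using bij_vimage_eq_inv_image[OF bL, of J] by (rule sym)
  have Jne: "L -` J \<noteq> {}"
  proof -
    obtain j where j: "j \<in> J" using J unfolding is_interval_def by blast
    have "surj L" using bL by (rule bij_is_surj)
    then obtain a where "j = L a" by (metis surjD)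
    then show ?thesis using j by auto
  qed
  have Ine: "L ` I \<noteq> {}" using I unfolding is_interval_def by blast
  have Icv: "poset_convex I" and Jcv: "poset_convex J" using I J unfolding is_interval_def by auto
  have "components (I \<inter> L -` J) \<subseteq> Omega I (L -` J)"
  proof
    fix C assume C: "C \<in> components (I \<inter> L -` J)"
    have CA: "C \<subseteq> I \<inter> L -` J" using C unfolding components_def by auto
    have d: "I \<inter> down_set C \<subseteq> C"
    proof
      fix x assume x: "x \<in> I \<inter> down_set C"
      then have "C \<noteq> {}" using C unfolding components_def by auto
      then obtain c where c: "c \<in> C" "x \<le> c" using x unfolding down_set_def by auto
      have "x \<in> up_set (L -` J)" using x IJ unfolding Ex_def by auto
      then obtain a where a: "L a \<in> J" "a \<le> x" using Jne unfolding up_set_def by auto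
      have "L c \<in> J" using CA c by auto
      moreover have "L a \<le> L x" "L x \<le> L c" using oL[of a x] oL[of x c] a(2) c(2) by simp_all
      ultimately have "L x \<in> J" using a Jcv unfolding poset_convex_def by blast
      then have "x \<in> I \<inter> L -` J" using x by auto
      then show "x \<in> C" using comp_absorb[OF C _ c(1)] c(2) by (auto simp: comparable_def)
    qed
    have u: "L -` J \<inter> up_set C \<subseteq> C"
    proof
      fix y assume y: "y \<in> L -` J \<inter> up_set C"
      then have "C \<noteq> {}" using C unfolding components_def by auto
      then obtain c where c: "c \<in> C" "c \<le> y" using y unfolding up_set_def by auto
      have "L y \<in> down_set (L ` I)" using y JI unfolding Ex_def by auto
      then obtain b where b: "b \<in> I" "L y \<le> L b" using Ine unfolding down_set_def by auto
      have "y \<le> b" using oL[of y b] b(2) by simp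
      moreover have "c \<in> I" using CA c by auto
      ultimately have "y \<in> I" using c b Icv unfolding poset_convex_def by blast
      then have "y \<in> I \<inter> L -` J" using y by auto
      then show "y \<in> C" using comp_absorb[OF C _ c(1)] c(2) by (auto simp: comparable_def)
    qed
    show "C \<in> Omega I (L -` J)" using C d u unfolding Omega_def by auto
  qed
  then show ?thesis unfolding K Omega_def by auto
qed

theorem lemma2p15:
  fixes Lam :: "real \<Rightarrow> 'a::order \<Rightarrow> 'a" and I J :: "'a set" and e :: real
  assumes "R_action Lam"
    and "is_interval I" and "is_interval J"
    and "e \<ge> 0"
    and "I \<subseteq> Ex Lam e J" and "J \<subseteq> Ex Lam e I"
  shows "Omega I (inv (Lam e) ` J) = components (I \<inter> inv (Lam e) ` J)
       \<and> Omega J (inv (Lam e) ` I) = components (J \<inter> inv (Lam e) ` I)"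
proof -
  have A: "poset_automorphism (Lam e)" using assms(1,4) unfolding R_action_def by auto
  have b: "bij (Lam e)" and o: "\<And>p q. p \<le> q \<longleftrightarrow> Lam e p \<le> Lam e q"
    using A unfolding poset_automorphism_def by auto
  have E: "\<And>A. Ex Lam e A = Ex (\<lambda>_. Lam e) e A" unfolding Ex_def by simp
  show ?thesis
    using key[OF b o assms(2,3)] key[OF b o assms(3,2)] assms(5,6) unfolding E by blast
qed

end
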